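(* Consider the following time-slotted remote tracking system. A source state $X_t$ evolves as a discrete-time Markov chain on $\{0,1,\dots,N\}$ ($N\in\mathbb{Z}_{>0}$) with transition probabilities $P_{i,k}=\Pr\{X_{t+1}=k\mid X_t=i\}$. A receiver holds an estimate $\hat X_t$. At each slot the transmitter chooses $\alpha_t\in\{0,1\}$ ($\alpha_t=1$: sample the source and transmit, incurring cost $c>0$). The channel realization $h_t\in\{0,1\}$ is i.i.d. with $\Pr(h_t=1)=p_s$; if $\alpha_t=1$ and $h_t=1$ the receiver updates $\hat X_{t+1}=X_t$, otherwise $\hat X_{t+1}=\hat X_t$. Given a nonnegative bounded actuation cost matrix $(C_{i,j})$, define, when $X_t=i$ and $\hat X_t=j$, $$g(t)=\begin{cases}\sum_{k=i}^{N} C_{k,j}P_{i,k}(1-p_s)+\sum_{k=i}^{N} C_{k,i}P_{i,k}\,p_s, & \alpha_t=1,\\[1mm] \sum_{k=i}^{N} C_{k,j}P_{i,k}, & \alpha_t=0.\end{cases}$$ Let $c_{\max}$ be a given bound and consider the problem of minimizing $\limsup_{T\to\infty}\frac1T\sum_{t=1}^T\mathbb{E}\{g(t)\}$ subject to $\bar c:=\lim_{T\to\infty}\frac1T\sum_{t=1}^T\mathbb{E}\{\alpha_t c\}\le c_{\max}$. The drift-plus-penalty (DPP) algorithm, with parameter $W>0$, maintains the virtual queue $Z(0)=0$, $Z(t+1)=\max[Z(t)-c_{\max},0]+\alpha_t c$, and at every slot $t$, observing $X_t$, $\hat X_t$ and $Z(t)$, chooses $\alpha_t\in\{0,1\}$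 minimizing $W g(t)+Z(t)(c\alpha_t-c_{\max})$. If the constrained problem is feasible, then the DPP algorithm satisfies the average cost constraint, i.e. $\limsup_{T\to\infty}\frac1T\sum_{t=1}^T\mathbb{E}\{\alpha_t c\}\le c_{\max}$.
   Context: $C_{i,j}$ is the cost of actuation error incurred when the source is in state $i$ while the receiver's estimate is $j$. A policy is a rule selecting $\alpha_t$ at each slot; the problem is feasible if some policy satisfies the average cost constraint. *)

theory Defs
  imports "HOL-Probability.Probability"
begin

text \<open>Source transition probabilities are given row-wise as pmfs: P i k = pmf (Q i) k.\<close>

definition gcost :: "nat \<Rightarrow> (nat \<Rightarrow> nat pmf) \<Rightarrow> real \<Rightarrow> (nat \<Rightarrow> nat \<Rightarrow> real)
    \<Rightarrow> nat \<Rightarrow> nat \<Rightarrow> bool \<Rightarrow> real" where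
  "gcost N Q ps C i j a =
     (if a then (\<Sum>k=i..N. C k j * pmf (Q i) k * (1 - ps)) + (\<Sum>k=i..N. C k i * pmf (Q i) k * ps)
      else (\<Sum>k=i..N. C k j * pmf (Q i) k))"

text \<open>General (history-dependent, randomized) policy: at slot t it sees the history of
  (X_s, Xhat_s, alpha_s, h_s) for s < t and the current (X_t, Xhat_t) and outputs
  a distribution of alpha_t.\<close>

type_synonym hist = "(nat \<times> nat \<times> bool \<times> bool) list"

primrec pol_dist :: "(nat \<Rightarrow> nat pmf) \<Rightarrow> real \<Rightarrow> (nat \<times> nat) pmf
    \<Rightarrow> (hist \<Rightarrow> nat \<Rightarrow> nat \<Rightarrow> bool pmf) \<Rightarrow> nat \<Rightarrow> (hist \<times> nat \<times> nat) pmf" where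
  "pol_dist Q ps \<mu>0 \<pi> 0 = map_pmf (\<lambda>(x, xh). ([], x, xh)) \<mu>0"
| "pol_dist Q ps \<mu>0 \<pi> (Suc t) =
     bind_pmf (pol_dist Q ps \<mu>0 \<pi> t) (\<lambda>(hs, x, xh).
       bind_pmf (\<pi> hs x xh) (\<lambda>a.
       bind_pmf (Q x) (\<lambda>x'.
       bind_pmf (bernoulli_pmf ps) (\<lambda>h.
       return_pmf (hs @ [(x, xh, a, h)], x', if a \<and> h then x else xh)))))"

definition pol_avg_cost :: "(nat \<Rightarrow> nat pmf) \<Rightarrow> real \<Rightarrow> (nat \<times> nat) pmf
    \<Rightarrow> (hist \<Rightarrow> nat \<Rightarrow> nat \<Rightarrow> bool pmf) \<Rightarrow> real \<Rightarrow> nat \<Rightarrow> real" where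
  "pol_avg_cost Q ps \<mu>0 \<pi> c T =
     (1 / real T) * (\<Sum>t<T. measure_pmf.expectation (pol_dist Q ps \<mu>0 \<pi> t)
                         (\<lambda>(hs, x, xh). c * pmf (\<pi> hs x xh) True))"

definition feasible :: "(nat \<Rightarrow> nat pmf) \<Rightarrow> real \<Rightarrow> (nat \<times> nat) pmf \<Rightarrow> real \<Rightarrow> real \<Rightarrow> bool" where
  "feasible Q ps \<mu>0 c cmax \<longleftrightarrow>
     (\<exists>\<pi>. convergent (pol_avg_cost Q ps \<mu>0 \<pi> c) \<and> lim (pol_avg_cost Q ps \<mu>0 \<pi> c) \<le> cmax)"

definition dpp_rule :: "nat \<Rightarrow> (nat \<Rightarrow> nat pmf) \<Rightarrow> real \<Rightarrow> (nat \<Rightarrow> nat \<Rightarrow> real) \<Rightarrow> real \<Rightarrow> real \<Rightarrow> real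
    \<Rightarrow> (nat \<Rightarrow> nat \<Rightarrow> nat \<Rightarrow> real \<Rightarrow> bool pmf) \<Rightarrow> bool" where
  "dpp_rule N Q ps C W c cmax \<delta> \<longleftrightarrow>
     (\<forall>t x xh z. set_pmf (\<delta> t x xh z) \<subseteq>
        {a. \<forall>b. W * gcost N Q ps C x xh a + z * (c * of_bool a - cmax)
                \<le> W * gcost N Q ps C x xh b + z * (c * of_bool b - cmax)})"

primrec dpp_dist :: "(nat \<Rightarrow> nat pmf) \<Rightarrow> real \<Rightarrow> real \<Rightarrow> real \<Rightarrow> (nat \<times> nat) pmf
    \<Rightarrow> (nat \<Rightarrow> nat \<Rightarrow> nat \<Rightarrow> real \<Rightarrow> bool pmf) \<Rightarrow> nat \<Rightarrow> (nat \<times> nat \<times> real) pmf" where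
  "dpp_dist Q ps c cmax \<mu>0 \<delta> 0 = map_pmf (\<lambda>(x, xh). (x, xh, 0)) \<mu>0"
| "dpp_dist Q ps c cmax \<mu>0 \<delta> (Suc t) =
     bind_pmf (dpp_dist Q ps c cmax \<mu>0 \<delta> t) (\<lambda>(x, xh, z).
       bind_pmf (\<delta> t x xh z) (\<lambda>a.
       bind_pmf (Q x) (\<lambda>x'.
       bind_pmf (bernoulli_pmf ps) (\<lambda>h.
       return_pmf (x', if a \<and> h then x else xh, max (z - cmax) 0 + (if a then c else 0))))))"

definition dpp_avg_cost :: "(nat \<Rightarrow> nat pmf) \<Rightarrow> real \<Rightarrow> real \<Rightarrow> real \<Rightarrow> (nat \<times> nat) pmf
    \<Rightarrow> (nat \<Rightarrow> nat \<Rightarrow> nat \<Rightarrow> real \<Rightarrow> bool pmf) \<Rightarrow> nat \<Rightarrow> real" where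
  "dpp_avg_cost Q ps c cmax \<mu>0 \<delta> T =
     (1 / real T) * (\<Sum>t<T. measure_pmf.expectation (dpp_dist Q ps c cmax \<mu>0 \<delta> t)
                         (\<lambda>(x, xh, z). c * pmf (\<delta> t x xh z) True))"

end

theory Submission
  imports Defs
begin

lemma exp_bind:
  fixes f :: "'b \<Rightarrow> real"
  assumes "\<And>y. \<bar>f y\<bar> \<le> B"
  shows "measure_pmf.expectation (bind_pmf M N) f = measure_pmf.expectation M (\<lambda>x. measure_pmf.expectation (N x) f)"
  unfolding measure_pmf_bind
  apply (rule integral_bind[where K="count_space UNIV" and B=B and B'=1])
  using assms apply (auto simp: space_subprob_algebra measure_pmf.subprob_space_axioms)
  done

lemma exp_const: "measure_pmf.expectation M (\<lambda>_. k) = (k::real)"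
  by simp

lemma sum_pmf_le1: "(\<Sum>k\<in>A. pmf p k) \<le> 1" if "finite A"
  using that by (simp add: measure_measure_pmf_finite[symmetric])

lemma gdiff:
  assumes "\<forall>i j. C i j \<le> B0" "0 \<le> B0" "0 \<le> ps" "ps \<le> 1" "\<forall>i j. 0 \<le> C i j"
  shows "gcost N Q ps C x xh False - gcost N Q ps C x xh True \<le> ps * B0"
proof -
  define S1 where "S1 = (\<Sum>k=x..N. C k xh * pmf (Q x) k)"
  define S2 where "S2 = (\<Sum>k=x..N. C k x * pmf (Q x) k)"
  have g1: "gcost N Q ps C x xh True = S1 * (1 - ps) + S2 * ps"
    by (simp add: gcost_def S1_def S2_def sum_distrib_right)
  have g0: "gcost N Q ps C x xh False = S1"
    by (simp add: gcost_def S1_def)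
  have "S2 \<ge> 0" unfolding S2_def using assms by (auto intro!: sum_nonneg)
  have "S1 \<le> (\<Sum>k=x..N. B0 * pmf (Q x) k)" unfolding S1_def
    using assms by (auto intro!: sum_mono mult_right_mono)
  also have "\<dots> = B0 * (\<Sum>k=x..N. pmf (Q x) k)" by (simp add: sum_distrib_left)
  also have "\<dots> \<le> B0" using sum_pmf_le1[of "{x..N}" "Q x"] assms by (simp add: mult_left_le)
  finally have "S1 \<le> B0" .
  have "ps * S1 \<le> ps * B0" using \<open>S1 \<le> B0\<close> assms by (simp add: mult_left_mono)
  moreover have "ps * S2 \<ge> 0" using \<open>S2 \<ge> 0\<close> assms by simp
  ultimately show ?thesis unfolding g1 g0 by (simp add: algebra_simps)
qed

theorem theorem2:
  fixes N :: nat and Q :: "nat \<Rightarrow> nat pmf" and ps c cmax W :: real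
    and C :: "nat \<Rightarrow> nat \<Rightarrow> real" and \<mu>0 :: "(nat \<times> nat) pmf"
    and \<delta> :: "nat \<Rightarrow> nat \<Rightarrow> nat \<Rightarrow> real \<Rightarrow> bool pmf"
  assumes "N > 0"
    and "\<forall>i\<le>N. set_pmf (Q i) \<subseteq> {..N}"
    and "set_pmf \<mu>0 \<subseteq> {..N} \<times> {..N}"
    and "0 \<le> ps" "ps \<le> 1"
    and "c > 0" "W > 0"
    and "\<forall>i j. 0 \<le> C i j" "\<exists>B. \<forall>i j. C i j \<le> B"
    and "feasible Q ps \<mu>0 c cmax"
    and "dpp_rule N Q ps C W c cmax \<delta>"
  shows "limsup (\<lambda>T. ereal (dpp_avg_cost Q ps c cmax \<mu>0 \<delta> T)) \<le> ereal cmax"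
proof -
  obtain B where B: "\<forall>i j. C i j \<le> B" using assms(9) by blast
  define B0 where "B0 = max B 0"
  have B0: "\<forall>i j. C i j \<le> B0" "0 \<le> B0" using B unfolding B0_def by (meson max.cobounded1 max.cobounded2 order_trans)+
  define M where "M = W * ps * B0 / c"
  define K where "K = M + c"
  have M0: "M \<ge> 0" unfolding M_def using assms B0 by simp
  have K0: "K \<ge> 0" unfolding K_def using M0 assms by simp
  have cmax0: "cmax \<ge> 0"
  proof -
    obtain \<pi> where pi: "convergent (pol_avg_cost Q ps \<mu>0 \<pi> c)" "lim (pol_avg_cost Q ps \<mu>0 \<pi> c) \<le> cmax"
      using assms(10) unfolding feasible_def by blast
    have nn: "\<And>T. 0 \<le> pol_avg_cost Q ps \<mu>0 \<pi> c T"
      unfolding pol_avg_cost_def using assms(6)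
      by (intro mult_nonneg_nonneg sum_nonneg integral_nonneg) (auto split: prod.splits)
    have "0 \<le> lim (pol_avg_cost Q ps \<mu>0 \<pi> c)"
      using pi(1) nn by (intro LIMSEQ_le_const[where X="pol_avg_cost Q ps \<mu>0 \<pi> c"]) (auto simp: convergent_LIMSEQ_iff)
    with pi(2) show ?thesis by simp
  qed
  define new where "new = (\<lambda>z a. max (z - cmax) 0 + (if a then c else (0::real)))"
  have key0: "0 \<le> new z a \<and> new z a \<le> K"
    if "0 \<le> z" "z \<le> K" "a \<in> set_pmf (\<delta> t x xh z)" for z a t x xh
  proof (cases a)
    case True
    have "W * gcost N Q ps C x xh True + z * (c * of_bool True - cmax)
          \<le> W * gcost N Q ps C x xh False + z * (c * of_bool False - cmax)"
    proof -
      have "\<forall>b. W * gcost N Q ps C x xh a + z * (c * of_bool a - cmax)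
                \<le> W * gcost N Q ps C x xh b + z * (c * of_bool b - cmax)"
        using assms(11) that(3) unfolding dpp_rule_def by blast
      then have "W * gcost N Q ps C x xh a + z * (c * of_bool a - cmax)
                \<le> W * gcost N Q ps C x xh False + z * (c * of_bool False - cmax)" by blast
      moreover have "a = True" using True by simp
      ultimately show ?thesis by simp
    qed
    hence "z * c \<le> W * (gcost N Q ps C x xh False - gcost N Q ps C x xh True)"
      by (simp add: algebra_simps)
    also have "\<dots> \<le> W * (ps * B0)"
      using gdiff[OF B0(1) B0(2) assms(4,5,8)] assms(7) by (simp add: mult_left_mono)
    finally have "z \<le> M" unfolding M_def using assms(6) by (simp add: pos_le_divide_eq mult_ac)
    then show ?thesis using True that cmax0 assms(6) by (auto simp: new_def K_def)
  next
    case False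
    then show ?thesis using that cmax0 by (auto simp: new_def)
  qed
  let ?D = "dpp_dist Q ps c cmax \<mu>0 \<delta>"
  have supp: "\<forall>s\<in>set_pmf (?D t). fst s \<le> N \<and> 0 \<le> snd (snd s) \<and> snd (snd s) \<le> K" for t
  proof (induction t)
    case 0
    then show ?case using assms(3) K0 by auto
  next
    case (Suc t)
    show ?case
    proof
      fix s assume "s \<in> set_pmf (?D (Suc t))"
      then obtain x xh z a x' h where xz: "(x, xh, z) \<in> set_pmf (?D t)" and a: "a \<in> set_pmf (\<delta> t x xh z)"
        and x': "x' \<in> set_pmf (Q x)" and s: "s = (x', if a \<and> h then x else xh, new z a)"
        by (auto simp: new_def split: prod.splits)
      show "fst s \<le> N \<and> 0 \<le> snd (snd s) \<and> snd (snd s) \<le> K"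
        using Suc.IH xz key0[OF _ _ a] assms(2) x' s by fastforce
    qed
  qed
  have fin: "finite (set_pmf (?D t))" for t
  proof (induction t)
    case 0
    have "finite (set_pmf \<mu>0)" using assms(3) by (rule finite_subset) auto
    then show ?case by simp
  next
    case (Suc t)
    have f1: "finite (set_pmf (Q x))" if "x \<le> N" for x
      using assms(2) that by (meson finite_atMost finite_subset)
    have f2: "finite (set_pmf (p :: bool pmf))" for p by (rule finite_subset[of _ UNIV]) auto
    show ?case using Suc supp[of t] f1 f2
      by (auto simp: split: prod.splits intro!: finite_UN_I)
  qed
  define cl where "cl = (\<lambda>z. max 0 (min z K))"
  define E where "E = (\<lambda>t. measure_pmf.expectation (?D t) (\<lambda>s. cl (snd (snd s))))"
  define cost where "cost = (\<lambda>t. measure_pmf.expectation (?D t) (\<lambda>(x, xh, z). c * pmf (\<delta> t x xh z) True))"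
  have clb: "\<bar>cl z\<bar> \<le> K" for z unfolding cl_def using K0 by auto
  have E0: "E 0 = 0" unfolding E_def cl_def using K0 by (simp add: case_prod_beta)
  have EK: "E t \<le> K" for t
  proof -
    have "E t \<le> measure_pmf.expectation (?D t) (\<lambda>_. K)" unfolding E_def
      using clb by (intro integral_mono integrable_measure_pmf_finite[OF fin]) (auto simp: abs_le_iff)
    then show ?thesis by simp
  qed
  have step: "E t - cmax + cost t \<le> E (Suc t)" for t
  proof -
    have inner: "measure_pmf.expectation (\<delta> t x xh z) (\<lambda>a.
          measure_pmf.expectation (Q x \<bind> (\<lambda>x'. bernoulli_pmf ps \<bind> (\<lambda>h.
            return_pmf (x', if a \<and> h then x else xh, new z a)))) (\<lambda>s. cl (snd (snd s))))
          \<ge> cl z - cmax + c * pmf (\<delta> t x xh z) True"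
      if xz: "(x, xh, z) \<in> set_pmf (?D t)" for x xh z
    proof -
      have z: "0 \<le> z" "z \<le> K" using supp[of t] xz by auto
      have "measure_pmf.expectation (\<delta> t x xh z) (\<lambda>a.
          measure_pmf.expectation (Q x \<bind> (\<lambda>x'. bernoulli_pmf ps \<bind> (\<lambda>h.
            return_pmf (x', if a \<and> h then x else xh, new z a)))) (\<lambda>s. cl (snd (snd s))))
          = measure_pmf.expectation (\<delta> t x xh z) (\<lambda>a. cl (new z a))"
        by (simp add: exp_bind[OF clb])
      also have "\<dots> = (\<Sum>a\<in>UNIV. cl (new z a) * pmf (\<delta> t x xh z) a)"
        by (rule integral_measure_pmf_real) auto
      also have "\<dots> = (\<Sum>a\<in>UNIV. new z a * pmf (\<delta> t x xh z) a)"
      proof (rule sum.cong)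
        fix a :: bool
        show "cl (new z a) * pmf (\<delta> t x xh z) a = new z a * pmf (\<delta> t x xh z) a"
        proof (cases "a \<in> set_pmf (\<delta> t x xh z)")
          case True
          then show ?thesis using key0[OF z True] unfolding cl_def by simp
        next
          case False
          then show ?thesis by (simp add: set_pmf_eq)
        qed
      qed simp
      also have "\<dots> = max (z - cmax) 0 + c * pmf (\<delta> t x xh z) True"
        by (simp add: UNIV_bool new_def pmf_False_conv_True algebra_simps)
      also have "\<dots> \<ge> cl z - cmax + c * pmf (\<delta> t x xh z) True"
        using z unfolding cl_def by simp
      finally show ?thesis by simp
    qed
    have "E (Suc t) = measure_pmf.expectation (?D t) (\<lambda>(x, xh, z). measure_pmf.expectation (\<delta> t x xh z) (\<lambda>a.
          measure_pmf.expectation (Q x \<bind> (\<lambda>x'. bernoulli_pmf ps \<bind> (\<lambda>h.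
            return_pmf (x', if a \<and> h then x else xh, new z a)))) (\<lambda>s. cl (snd (snd s)))))"
      unfolding E_def dpp_dist.simps
      apply (subst exp_bind[OF clb])
      apply (rule Bochner_Integration.integral_cong[OF refl])
      apply (auto split: prod.splits simp: exp_bind[OF clb] new_def)
      done
    also have "\<dots> \<ge> measure_pmf.expectation (?D t) (\<lambda>s. cl (snd (snd s)) - cmax + (case s of (x, xh, z) \<Rightarrow> c * pmf (\<delta> t x xh z) True))"
      apply (intro integral_mono_AE integrable_measure_pmf_finite[OF fin] AE_pmfI)
      using inner by (auto split: prod.splits)
    also have "measure_pmf.expectation (?D t) (\<lambda>s. cl (snd (snd s)) - cmax + (case s of (x, xh, z) \<Rightarrow> c * pmf (\<delta> t x xh z) True))
       = E t - cmax + cost t"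
      unfolding E_def cost_def
      by (simp add: Bochner_Integration.integral_add Bochner_Integration.integral_diff integrable_measure_pmf_finite[OF fin] split_def)
    finally show ?thesis by simp
  qed
  have sumb: "(\<Sum>t<T. cost t) \<le> E T - E 0 + real T * cmax" for T
  proof (induction T)
    case 0 then show ?case by simp
  next
    case (Suc T) then show ?case using step[of T] by (simp add: algebra_simps)
  qed
  have avg: "dpp_avg_cost Q ps c cmax \<mu>0 \<delta> T \<le> cmax + K / real T" if "T > 0" for T
  proof -
    have "dpp_avg_cost Q ps c cmax \<mu>0 \<delta> T = (\<Sum>t<T. cost t) / real T"
      unfolding dpp_avg_cost_def cost_def by simp
    also have "\<dots> \<le> (K + real T * cmax) / real T"
      using sumb[of T] EK[of T] E0 that by (intro divide_right_mono) auto
    also have "\<dots> = cmax + K / real T" using that by (simp add: field_simps)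
    finally show ?thesis .
  qed
  have "limsup (\<lambda>T. ereal (dpp_avg_cost Q ps c cmax \<mu>0 \<delta> T)) \<le> limsup (\<lambda>T. ereal (cmax + K / real T))"
    apply (rule Limsup_mono)
    using avg by (auto simp: eventually_sequentially intro!: exI[of _ 1])
  also have "limsup (\<lambda>T. ereal (cmax + K / real T)) = ereal cmax"
  proof (rule lim_imp_Limsup)
    show "((\<lambda>T. ereal (cmax + K / real T)) \<longlongrightarrow> ereal cmax) sequentially"
      using tendsto_add[OF tendsto_const lim_const_over_n[of K], of cmax] by simp
  qed simp
  finally show ?thesis .
qed
end
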